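(* Let $X=(X_1,\dots,X_d)$ be a random vector with values in $\{0,1\}^d$ such that $\mathbb{P}(X=x)>0$ for every $x\in\{0,1\}^d$. For $A\subseteq D:=\{1,\dots,d\}$ let $e_A(X_A):=\dfrac{(-1)^{\sum_{j\in A}X_j}}{\mathbf{P}_A(X_A)}$, with $e_\emptyset(X_\emptyset)=1$. Then for all $A,B\subseteq D$ with $B\subsetneq A$, $\mathbb{E}[e_A(X_A)e_B(X_B)]=0$.
   Context: $X_A:=(X_i)_{i\in A}$ and $\mathbf{P}_A(x_A):=\mathbb{P}(X_A=x_A)$ is its probability mass function. *)

theory Defs
  imports "HOL-Probability.Probability"
begin

text \<open>A random vector X = (X_1,...,X_d) with values in {0,1}^d is modelled by its
  distribution, a pmf p on functions x :: nat => nat; outcomes lie in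
  PiE {1..d} (\<lambda>_. {0,1}) (value undefined outside {1..d}).\<close>

definition cube :: "nat \<Rightarrow> (nat \<Rightarrow> nat) set" where
  "cube d = PiE {1..d} (\<lambda>_. {0, 1})"

definition marg :: "(nat \<Rightarrow> nat) pmf \<Rightarrow> nat set \<Rightarrow> (nat \<Rightarrow> nat) \<Rightarrow> real" where
  "marg p A x = measure_pmf.prob p {y. \<forall>j\<in>A. y j = x j}"

definition eA :: "(nat \<Rightarrow> nat) pmf \<Rightarrow> nat set \<Rightarrow> (nat \<Rightarrow> nat) \<Rightarrow> real" where
  "eA p A x = (if A = {} then 1 else (-1) ^ (\<Sum>j\<in>A. x j) / marg p A x)"

end

theory Submission
  imports Defs
begin

lemma marg_cong: "(\<forall>i\<in>A. x i = y i) \<Longrightarrow> marg p A x = marg p A y"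
  unfolding marg_def by (rule arg_cong[where f="measure_pmf.prob p"]) auto

lemma eA_cong: "(\<forall>i\<in>A. x i = y i) \<Longrightarrow> eA p A x = eA p A y"
  unfolding eA_def using marg_cong[of A x y p]
  by (metis (no_types, lifting) sum.cong)

theorem proposition3:
  fixes d :: nat and p :: "(nat \<Rightarrow> nat) pmf" and A B :: "nat set"
  assumes "set_pmf p \<subseteq> cube d"
    and "\<forall>x\<in>cube d. pmf p x > 0"
    and "A \<subseteq> {1..d}" and "B \<subset> A"
  shows "measure_pmf.expectation p (\<lambda>x. eA p A x * eA p B x) = 0"
proof -
  note sp = assms(1) and pos = assms(2) and AD = assms(3) and BA = assms(4)
  define C where "C = cube d"
  have finC: "finite C" unfolding C_def cube_def by (simp add: finite_PiE)
  define R where "R = (\<lambda>x::nat\<Rightarrow>nat. restrict x A)"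
  define f where "f = (\<lambda>x. eA p A x * eA p B x)"
  have RA: "\<forall>i\<in>A. R x i = x i" for x unfolding R_def by simp
  have fR: "f (R x) = f x" for x
    unfolding f_def using eA_cong[of A "R x" x p] eA_cong[of B "R x" x p] RA[of x] BA by auto
  have R_eq: "R x = R y \<longleftrightarrow> (\<forall>i\<in>A. x i = y i)" for x y
    unfolding R_def by (auto simp: restrict_def fun_eq_iff)
  have marg_sum: "marg p A a = (\<Sum>x\<in>{x\<in>C. R x = R a}. pmf p x)" for a
  proof -
    let ?S = "{y. \<forall>j\<in>A. y j = a j}"
    have "marg p A a = measure_pmf.prob p ?S" by (simp add: marg_def)
    also have "\<dots> = measure_pmf.prob p (?S \<inter> C)"
    proof -
      have "?S \<inter> set_pmf p = (?S \<inter> C) \<inter> set_pmf p" using sp C_def by auto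
      then have "measure_pmf.prob p (?S \<inter> set_pmf p) = measure_pmf.prob p ((?S \<inter> C) \<inter> set_pmf p)" by simp
      then show ?thesis by (simp only: measure_Int_set_pmf)
    qed
    also have "?S \<inter> C = {x\<in>C. R x = R a}" using R_eq by auto
    also have "measure_pmf.prob p \<dots> = (\<Sum>x\<in>{x\<in>C. R x = R a}. pmf p x)"
      using finC by (simp add: measure_measure_pmf_finite)
    finally show ?thesis .
  qed
  have "measure_pmf.expectation p f = (\<Sum>x\<in>C. pmf p x *\<^sub>R f x)"
    using sp C_def by (intro integral_measure_pmf[OF finC]) auto
  also have "\<dots> = (\<Sum>a\<in>R ` C. \<Sum>x\<in>{x\<in>C. R x = a}. pmf p x * f x)"
    using sum.image_gen[OF finC, of "\<lambda>x. pmf p x * f x" R] by simp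
  also have "\<dots> = (\<Sum>a\<in>R ` C. f a * marg p A a)"
  proof (rule sum.cong)
    fix a assume "a \<in> R ` C"
    then obtain z where z: "z \<in> C" "a = R z" by auto
    have "(\<Sum>x\<in>{x\<in>C. R x = a}. pmf p x * f x) = (\<Sum>x\<in>{x\<in>C. R x = a}. f a * pmf p x)"
    proof (rule sum.cong)
      fix x assume "x \<in> {x\<in>C. R x = a}"
      then have "R x = a" by simp
      then show "pmf p x * f x = f a * pmf p x" using fR[of x] by (simp add: mult.commute)
    qed simp
    also have "\<dots> = f a * (\<Sum>x\<in>{x\<in>C. R x = a}. pmf p x)" by (simp add: sum_distrib_left)
    also have "R a = a" using z R_def by auto
    then have "(\<Sum>x\<in>{x\<in>C. R x = a}. pmf p x) = marg p A a" using marg_sum[of a] by simp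
    finally show "(\<Sum>x\<in>{x\<in>C. R x = a}. pmf p x * f x) = f a * marg p A a" by simp
  qed simp
  finally have E: "measure_pmf.expectation p f = (\<Sum>a\<in>R ` C. f a * marg p A a)" .
  obtain j where j: "j \<in> A" "j \<notin> B" using BA by auto
  have Ane: "A \<noteq> {}" using j by auto
  define K where "K = (\<lambda>a. f a * marg p A a)"
  define s where "s = (\<lambda>a::nat\<Rightarrow>nat. a(j := 1 - a j))"
  have ss: "s (s a) = a" if "a j \<in> {0,1}" for a using that unfolding s_def by auto
  have jD: "1 \<le> j" "j \<le> d" using j AD by auto
  have Cj: "x j \<in> {0,1}" if "x \<in> C" for x
    using that jD unfolding C_def cube_def by (auto simp: PiE_def Pi_def)
  have sC: "s x \<in> C" if "x \<in> C" for x
    using that jD Cj[OF that] unfolding C_def cube_def s_def by (auto simp: PiE_def Pi_def extensional_def)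
  have Rs: "R (s x) = s (R x)" for x unfolding R_def s_def using j by (auto simp: restrict_def fun_eq_iff)
  have sRC: "s a \<in> R ` C" if "a \<in> R ` C" for a
    using that sC Rs by (metis image_iff)
  have RCj: "a j \<in> {0,1}" if aRC: "a \<in> R ` C" for a 
  proof -
    obtain x where x: "x \<in> C" "a = R x" using aRC by auto
    show ?thesis using Cj[OF x(1)] x(2) j by (simp add: R_def)
  qed
  have bij: "bij_betw s (R ` C) (R ` C)"
    by (rule bij_betw_byWitness[where f'=s]) (auto intro!: ss RCj sRC simp del: insert_iff)
  have Kneg: "K (s a) = - K a" if a: "a \<in> R ` C" for a
  proof -
    obtain z where z: "z \<in> C" "a = R z" using a by auto
    have mpos: "marg p A a > 0" if aRC: "a \<in> R ` C" for a
    proof -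
      obtain z where z: "z \<in> C" "a = R z" using aRC by auto
      have "R a = a" using z R_def by auto
      then have "marg p A a = (\<Sum>x\<in>{x\<in>C. R x = a}. pmf p x)" using marg_sum[of a] by simp
      also have "\<dots> > 0"
        using z pos finC C_def by (intro sum_pos) auto
      finally show ?thesis .
    qed
    have m1: "marg p A a \<noteq> 0" using mpos[OF a] by simp
    have m2: "marg p A (s a) \<noteq> 0" using mpos[OF sRC[OF a]] by simp
    have eB: "eA p B (s a) = eA p B a" using j by (intro eA_cong) (auto simp: s_def)
    have sumA: "(\<Sum>i\<in>A. s a i) = (\<Sum>i\<in>A-{j}. a i) + (1 - a j)"
      "(\<Sum>i\<in>A. a i) = (\<Sum>i\<in>A-{j}. a i) + a j"
    proof -
      have fA: "finite A" using AD finite_subset by blast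
      show "(\<Sum>i\<in>A. s a i) = (\<Sum>i\<in>A-{j}. a i) + (1 - a j)"
      proof -
        have "(\<Sum>i\<in>A-{j}. s a i) = (\<Sum>i\<in>A-{j}. a i)"
          by (rule sum.cong) (auto simp: s_def)
        moreover have "s a j = 1 - a j" by (simp add: s_def)
        ultimately show ?thesis using sum.remove[OF fA j(1), of "s a"] by simp
      qed
      show "(\<Sum>i\<in>A. a i) = (\<Sum>i\<in>A-{j}. a i) + a j"
        using sum.remove[OF fA j(1), of a] by simp
    qed
    have sg: "((-1::real) ^ (\<Sum>i\<in>A. s a i)) = - ((-1) ^ (\<Sum>i\<in>A. a i))"
      using RCj[OF a] unfolding sumA by (auto simp: power_add)
    show ?thesis unfolding K_def f_def eA_def using Ane m1 m2 eB sg
      by (simp add: eA_def)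
  qed
  have "sum K (R ` C) = sum (K \<circ> s) (R ` C)"
    using sum.reindex_bij_betw[OF bij, of K] by (simp add: comp_def)
  also have "\<dots> = - sum K (R ` C)"
    unfolding sum_negf[symmetric] by (rule sum.cong) (simp_all add: Kneg)
  finally have "sum K (R ` C) = 0" by simp
  then show ?thesis using E unfolding f_def K_def by simp
qed

end
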